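(* Let $\mathbf{x}=(\mathbf{x}_1,\dots,\mathbf{x}_n)$ and $\mathbf{y}=(\mathbf{y}_1,\dots,\mathbf{y}_n)$ be Generalized Nash equilibria of $G^{(2)}$ such that $\mathbf{x}_T^{(j)}\le\mathbf{y}_T^{(j)}$ for all $j\in[m]$. Then: (1) if $i\in\mathcal{T}_I(\mathbf{x})$, then $J_{\mathbf{y}_{-i}}\subset J_{\mathbf{x}_{-i}}$; (2) $\mathcal{T}_I(\mathbf{x})\subset\mathcal{T}_I(\mathbf{y})$.
   Context: $G^{(2)}$ is a Fragile multi-CPR Game: $n,m\ge1$, $[k]=\{1,\dots,k\}$, $C_m=\{(x_1,\dots,x_m)\in[0,1]^m:\sum_j x_j\le1\}$, $\mathcal{C}_n=\prod_{i\in[n]}C_m$, $\mathcal{C}_{-i}=\prod_{[n]\setminus\{i\}}C_m$. A profile is $\mathbf{x}=(\mathbf{x}_1,\dots,\mathbf{x}_n)$, $\mathbf{x}_i=(x_{i1},\dots,x_{im})$; write $\mathbf{x}=(\mathbf{x}_i,\mathbf{x}_{-i})$; $\mathbf{x}_T^{(j)}=\sum_i x_{ij}$, $\mathbf{x}_T^{j|i}=\sum_{\ell\ne i}x_{\ell j}$ (similarly for $\mathbf{y}$). Each CPR $j$ has return rate $\mathcal{R}_j(t)>1$ and failure probability $p_j(t)\in[0,1]$; each player $i$ has parameters $a_i,k_i$. $\mathcal{F}_{ij}(t)=(\mathcal{R}_j(t)-1)^{a_i}(1-p_j(t))-k_ip_j(t)$; utility $\mathcal{V}_i(\mathbf{x}_i;\mathbf{x}_{-i})=\sum_j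 x_{ij}^{a_i}\mathcal{F}_{ij}(\mathbf{x}_T^{(j)})$. Assumption: (1) $p_j(0)=0$, $p_j(t)=1$ for $t\ge1$; (2) $a_i\in(0,1]$, $k_i>0$; (3) each $\mathcal{F}_{ij}$ (continuous on $[0,1]$) has strictly negative first and second derivatives on $(0,1)$. $\omega_{ij}\in(0,1)$ is the unique zero of $\mathcal{F}_{ij}$ in $(0,1)$. $A(\mathbf{x}_{-i})=\{j:\mathbf{x}_T^{j|i}<\omega_{ij}\}$. $\vartheta_i(\mathbf{x}_{-i})=C_m\cap\big(\prod_{j\in A(\mathbf{x}_{-i})}[0,\omega_{ij}-\mathbf{x}_T^{j|i}]\times\prod_{j\notin A(\mathbf{x}_{-i})}\{0\}\big)$. A Generalized Nash equilibrium is $\mathbf{x}\in\mathcal{C}_n$ with, for all $i$, $\mathbf{x}_i\in\vartheta_i(\mathbf{x}_{-i})$ and $\mathcal{V}_i(\mathbf{x}_i;\mathbf{x}_{-i})\ge\mathcal{V}_i(\mathbf{z};\mathbf{x}_{-i})$ for all $\mathbf{z}\in\vartheta_i(\mathbf{x}_{-i})$. $\psi_{ij}(x;s)=x\,\mathcal{F}_{ij}'(x+s)+a_i\mathcal{F}_{ij}(x+s)$. For a GNE $\mathbf{x}$: $J_{\mathbf{x}_{-i}}=\{j\in A(\mathbf{x}_{-i}):x_{ij}\ne0\}$; $\mathbf{x}_i$ is of Type I if $\sum_{j\in J_{\mathbf{x}_{-i}}}x_{ij}<1$ and $\psi_{ij}(x_{ij};\mathbf{x}_T^{j|i})=0$ for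 all $j\in J_{\mathbf{x}_{-i}}$; of Type II if $\sum_{j\in J_{\mathbf{x}_{-i}}}x_{ij}=1$ and there is $\kappa_0\ge0$ with $x_{ij}^{a_i-1}\psi_{ij}(x_{ij};\mathbf{x}_T^{j|i})=\kappa_0$ for all $j\in J_{\mathbf{x}_{-i}}$. $\mathcal{T}_I(\mathbf{x})=\{i\in[n]:\mathbf{x}_i\text{ is of Type I}\}$. *)

theory Defs
  imports "HOL-Analysis.Analysis"
begin

(* Players are indexed by {..<n}, CPRs by {..<m}.
   A profile is x :: nat => nat => real, x i j = investment of player i in CPR j.
   R j t : return rate of CPR j, p j t : failure probability of CPR j,
   a i, k i : player parameters. *)

definition Fij :: "(nat \<Rightarrow> real \<Rightarrow> real) \<Rightarrow> (nat \<Rightarrow> real \<Rightarrow> real) \<Rightarrow> (nat \<Rightarrow> real) \<Rightarrow> (nat \<Rightarrow> real)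
                   \<Rightarrow> nat \<Rightarrow> nat \<Rightarrow> real \<Rightarrow> real" where
  "Fij R p a k i j t = (R j t - 1) powr (a i) * (1 - p j t) - k i * p j t"

definition fragile_game :: "nat \<Rightarrow> nat \<Rightarrow> (nat \<Rightarrow> real \<Rightarrow> real) \<Rightarrow> (nat \<Rightarrow> real \<Rightarrow> real)
                   \<Rightarrow> (nat \<Rightarrow> real) \<Rightarrow> (nat \<Rightarrow> real) \<Rightarrow> bool" where
  "fragile_game n m R p a k \<longleftrightarrow>
     n \<ge> 1 \<and> m \<ge> 1 \<and>
     (\<forall>j<m. \<forall>t\<ge>0. R j t > 1 \<and> 0 \<le> p j t \<and> p j t \<le> 1) \<and>
     (\<forall>j<m. p j 0 = 0 \<and> (\<forall>t\<ge>1. p j t = 1)) \<and>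
     (\<forall>i<n. 0 < a i \<and> a i \<le> 1 \<and> k i > 0) \<and>
     (\<forall>i<n. \<forall>j<m. continuous_on {0..1} (Fij R p a k i j) \<and>
        (\<forall>t\<in>{0<..<1}. Fij R p a k i j differentiable (at t) \<and>
                        deriv (Fij R p a k i j) differentiable (at t) \<and>
                        deriv (Fij R p a k i j) t < 0 \<and>
                        deriv (deriv (Fij R p a k i j)) t < 0))"

definition omega where
  "omega R p a k i j = (THE w. w \<in> {0<..<1} \<and> Fij R p a k i j w = 0)"

definition simplexC :: "nat \<Rightarrow> (nat \<Rightarrow> real) \<Rightarrow> bool" where
  "simplexC m v \<longleftrightarrow> (\<forall>j<m. 0 \<le> v j \<and> v j \<le> 1) \<and> (\<Sum>j<m. v j) \<le> 1"

definition totalT :: "nat \<Rightarrow> (nat \<Rightarrow> nat \<Rightarrow> real) \<Rightarrow> nat \<Rightarrow> real" where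
  "totalT n x j = (\<Sum>l<n. x l j)"

definition totalT_except :: "nat \<Rightarrow> (nat \<Rightarrow> nat \<Rightarrow> real) \<Rightarrow> nat \<Rightarrow> nat \<Rightarrow> real" where
  "totalT_except n x i j = (\<Sum>l\<in>{..<n} - {i}. x l j)"

definition utilV where
  "utilV n m R p a k x i z =
     (\<Sum>j<m. z j powr (a i) * Fij R p a k i j (z j + totalT_except n x i j))"

definition activeA where
  "activeA n m R p a k x i = {j. j < m \<and> totalT_except n x i j < omega R p a k i j}"

definition thetaSet where
  "thetaSet n m R p a k x i =
     {z. simplexC m z \<and>
         (\<forall>j<m. (j \<in> activeA n m R p a k x i \<longrightarrow> 0 \<le> z j \<and> z j \<le> omega R p a k i j - totalT_except n x i j)
               \<and> (j \<notin> activeA n m R p a k x i \<longrightarrow> z j = 0))}"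

definition is_GNE where
  "is_GNE n m R p a k x \<longleftrightarrow>
     (\<forall>i<n. simplexC m (x i)) \<and>
     (\<forall>i<n. x i \<in> thetaSet n m R p a k x i \<and>
            (\<forall>z\<in>thetaSet n m R p a k x i. utilV n m R p a k x i (x i) \<ge> utilV n m R p a k x i z))"

definition psi where
  "psi R p a k i j y s = y * deriv (Fij R p a k i j) (y + s) + a i * Fij R p a k i j (y + s)"

definition Jset where
  "Jset n m R p a k x i = {j \<in> activeA n m R p a k x i. x i j \<noteq> 0}"

definition typeI where
  "typeI n m R p a k x i \<longleftrightarrow>
     (\<Sum>j\<in>Jset n m R p a k x i. x i j) < 1 \<and>
     (\<forall>j\<in>Jset n m R p a k x i. psi R p a k i j (x i j) (totalT_except n x i j) = 0)"

definition TI where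
  "TI n m R p a k x = {i. i < n \<and> typeI n m R p a k x i}"

end

theory Submission imports Defs begin
lemma F_strict_dec:
  fixes F :: "real \<Rightarrow> real"
  assumes cont: "continuous_on {0..1} F"
    and der: "\<forall>t\<in>{0<..<1}. F differentiable (at t) \<and> deriv F t < 0"
    and "0 \<le> u" "u < v" "v \<le> 1"
  shows "F v < F u"
proof (rule DERIV_neg_imp_decreasing_open[OF \<open>u < v\<close>])
  fix t assume "u < t" "t < v"
  then have "t \<in> {0<..<1}" using assms by auto
  then show "\<exists>y. DERIV F t :> y \<and> y < 0"
    using der DERIV_deriv_iff_real_differentiable by blast
next
  show "continuous_on {u..v} F" using cont assms by (auto intro: continuous_on_subset)
qed

lemma Fd_mono:
  fixes F :: "real \<Rightarrow> real"
  assumes der: "\<forall>t\<in>{0<..<1}. deriv F differentiable (at t) \<and> deriv (deriv F) t < 0"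
    and "0 < u" "u \<le> v" "v < 1"
  shows "deriv F v \<le> deriv F u"
proof (cases "u = v")
  case False
  then have uv: "u < v" using assms by auto
  have "deriv F v < deriv F u"
  proof (rule DERIV_neg_imp_decreasing_open[OF uv])
    fix t assume "u < t" "t < v"
    then have "t \<in> {0<..<1}" using assms by auto
    then show "\<exists>y. DERIV (deriv F) t :> y \<and> y < 0"
      using der DERIV_deriv_iff_real_differentiable by blast
  next
    have "\<forall>t\<in>{u..v}. isCont (deriv F) t"
      using der assms by (auto intro!: differentiable_imp_continuous_within)
    then show "continuous_on {u..v} (deriv F)" using continuous_at_imp_continuous_on by blast
  qed
  then show ?thesis by simp
qed simp

lemma g_deriv:
  fixes F :: "real \<Rightarrow> real"
  assumes "F differentiable (at (y + s))" "y > 0"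
  shows "((\<lambda>z. z powr a * F (z + s)) has_real_derivative
            y powr (a - 1) * (y * deriv F (y + s) + a * F (y + s))) (at y)"
proof -
  have dF: "(F has_real_derivative deriv F (y + s)) (at (y + s))"
    using assms DERIV_deriv_iff_real_differentiable by blast
  have d2: "((\<lambda>z. F (z + s)) has_real_derivative deriv F (y + s)) (at y)"
  proof -
    have "((\<lambda>z. z + s) has_real_derivative 1) (at y)" by (auto intro!: derivative_eq_intros)
    from DERIV_chain2[of F _ "\<lambda>z. z + s", OF _ this] dF show ?thesis by simp
  qed
  have "((\<lambda>z. z powr a * F (z + s)) has_real_derivative
          a * y powr (a - 1) * F (y + s) + deriv F (y + s) * y powr a) (at y)"
    by (rule DERIV_mult[OF has_real_derivative_powr[OF \<open>y > 0\<close>] d2])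
  moreover have "y powr a = y powr (a - 1) * y"
    using \<open>y > 0\<close> by (simp add: powr_diff)
  ultimately show ?thesis by (simp add: algebra_simps)
qed

lemma left_opt:
  fixes g :: "real \<Rightarrow> real"
  assumes "DERIV g y :> D" "e > 0" "\<And>v. y - e \<le> v \<Longrightarrow> v \<le> y \<Longrightarrow> g v \<le> g y"
  shows "D \<ge> 0"
proof (rule ccontr)
  assume "\<not> D \<ge> 0"
  then obtain d where d: "d > 0" "\<forall>h>0. h < d \<longrightarrow> g y < g (y - h)"
    using DERIV_neg_dec_left[OF assms(1)] by auto
  define h where "h = min d e / 2"
  have "h > 0" "h < d" "h \<le> e" using d assms by (auto simp: h_def)
  then show False using d assms(3)[of "y - h"] by force
qed

lemma right_opt:
  fixes g :: "real \<Rightarrow> real"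
  assumes "DERIV g y :> D" "e > 0" "\<And>v. y \<le> v \<Longrightarrow> v \<le> y + e \<Longrightarrow> g v \<le> g y"
  shows "D \<le> 0"
proof (rule ccontr)
  assume "\<not> D \<le> 0"
  then obtain d where d: "d > 0" "\<forall>h>0. h < d \<longrightarrow> g y < g (y + h)"
    using DERIV_pos_inc_right[OF assms(1)] by auto
  define h where "h = min d e / 2"
  have "h > 0" "h < d" "h \<le> e" using d assms by (auto simp: h_def)
  then show False using d assms(3)[of "y + h"] by force
qed

lemma game_F:
  assumes G: "fragile_game n m R p a k" and "i < n" "j < m"
  defines "F \<equiv> Fij R p a k i j"
  shows "F 0 > 0" "F 1 < 0"
    and "\<And>u v. 0 \<le> u \<Longrightarrow> u < v \<Longrightarrow> v \<le> 1 \<Longrightarrow> F v < F u"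
    and "\<And>u v. 0 < u \<Longrightarrow> u \<le> v \<Longrightarrow> v < 1 \<Longrightarrow> deriv F v \<le> deriv F u"
    and "\<And>t. 0 < t \<Longrightarrow> t < 1 \<Longrightarrow> F differentiable (at t)"
    and "\<And>t. 0 < t \<Longrightarrow> t < 1 \<Longrightarrow> deriv F t < 0"
    and "0 < omega R p a k i j" "omega R p a k i j < 1" "F (omega R p a k i j) = 0"
    and "\<And>t. 0 \<le> t \<Longrightarrow> t < omega R p a k i j \<Longrightarrow> F t > 0"
proof -
  have ai: "0 < a i" "a i \<le> 1" "k i > 0" using G \<open>i < n\<close> unfolding fragile_game_def by auto
  have R0: "R j 0 > 1" "p j 0 = 0" "p j 1 = 1" using G \<open>j < m\<close> unfolding fragile_game_def by auto
  have C: "continuous_on {0..1} F"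
    and D: "\<forall>t\<in>{0<..<1}. F differentiable (at t) \<and> deriv F differentiable (at t) \<and>
                        deriv F t < 0 \<and> deriv (deriv F) t < 0"
    using G \<open>i < n\<close> \<open>j < m\<close> unfolding fragile_game_def F_def by auto
  show F0: "F 0 > 0" using R0 ai unfolding F_def Fij_def by simp
  show F1: "F 1 < 0" using R0 ai unfolding F_def Fij_def by simp
  show dec: "\<And>u v. 0 \<le> u \<Longrightarrow> u < v \<Longrightarrow> v \<le> 1 \<Longrightarrow> F v < F u"
    using F_strict_dec[OF C] D by blast
  show "\<And>u v. 0 < u \<Longrightarrow> u \<le> v \<Longrightarrow> v < 1 \<Longrightarrow> deriv F v \<le> deriv F u"
    using Fd_mono D by blast
  show "\<And>t. 0 < t \<Longrightarrow> t < 1 \<Longrightarrow> F differentiable (at t)" using D by auto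
  show "\<And>t. 0 < t \<Longrightarrow> t < 1 \<Longrightarrow> deriv F t < 0" using D by auto
  obtain w where w: "0 \<le> w" "w \<le> 1" "F w = 0" using IVT2'[of F 1 0 0] F0 F1 C by force
  have w01: "w \<in> {0<..<1}" using w F0 F1 by (cases "w = 0"; cases "w = 1") auto
  have om: "omega R p a k i j = w"
    unfolding omega_def F_def[symmetric]
  proof (rule the_equality)
    show "w \<in> {0<..<1} \<and> F w = 0" using w01 w by auto
  next
    fix w' assume "w' \<in> {0<..<1} \<and> F w' = 0"
    then show "w' = w" using dec[of w w'] dec[of w' w] w01 w by (cases "w < w'"; cases "w' < w") auto
  qed
  show "0 < omega R p a k i j" "omega R p a k i j < 1" "F (omega R p a k i j) = 0"
    using om w01 w by auto
  show "\<And>t. 0 \<le> t \<Longrightarrow> t < omega R p a k i j \<Longrightarrow> F t > 0"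
    using dec[of _ w] om w by auto
qed

lemma local_opt:
  assumes GN: "is_GNE n m R p a k y" and "i < n" and act: "j \<in> activeA n m R p a k y i"
    and v: "0 \<le> v" "v \<le> omega R p a k i j - totalT_except n y i j" "v \<le> 1"
    "(\<Sum>j'<m. y i j') - y i j + v \<le> 1"
  shows "v powr a i * Fij R p a k i j (v + totalT_except n y i j)
         \<le> y i j powr a i * Fij R p a k i j (y i j + totalT_except n y i j)"
proof -
  have jm: "j < m" using act unfolding activeA_def by auto
  define z where "z = (y i)(j := v)"
  have yi: "y i \<in> thetaSet n m R p a k y i"
    and opt: "\<forall>z\<in>thetaSet n m R p a k y i. utilV n m R p a k y i (y i) \<ge> utilV n m R p a k y i z"
    using GN \<open>i < n\<close> unfolding is_GNE_def by auto
  have sy: "simplexC m (y i)" using yi unfolding thetaSet_def by auto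
  have sumz: "(\<Sum>j'<m. z j') = (\<Sum>j'<m. y i j') - y i j + v"
  proof -
    have "(\<Sum>j'<m. z j') = z j + (\<Sum>j'\<in>{..<m} - {j}. z j')" using jm by (simp add: sum.remove)
    moreover have "(\<Sum>j'<m. y i j') = y i j + (\<Sum>j'\<in>{..<m} - {j}. y i j')" using jm by (simp add: sum.remove)
    moreover have "(\<Sum>j'\<in>{..<m} - {j}. z j') = (\<Sum>j'\<in>{..<m} - {j}. y i j')"
      by (rule sum.cong) (auto simp: z_def)
    ultimately show ?thesis by (simp add: z_def)
  qed
  have "z \<in> thetaSet n m R p a k y i"
    using yi sy v act sumz unfolding thetaSet_def simplexC_def z_def by auto
  then have U: "utilV n m R p a k y i z \<le> utilV n m R p a k y i (y i)" using opt by blast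
  let ?T = "\<lambda>w j. w j powr a i * Fij R p a k i j (w j + totalT_except n y i j)"
  have "utilV n m R p a k y i z = ?T z j + (\<Sum>j'\<in>{..<m} - {j}. ?T z j')"
    unfolding utilV_def using jm by (simp add: sum.remove)
  moreover have "utilV n m R p a k y i (y i) = ?T (y i) j + (\<Sum>j'\<in>{..<m} - {j}. ?T (y i) j')"
    unfolding utilV_def using jm by (simp add: sum.remove)
  moreover have "(\<Sum>j'\<in>{..<m} - {j}. ?T z j') = (\<Sum>j'\<in>{..<m} - {j}. ?T (y i) j')"
    by (rule sum.cong) (auto simp: z_def)
  ultimately show ?thesis using U by (simp add: z_def)
qed

lemma gne_basic:
  assumes "is_GNE n m R p a k x" "l < n"
  shows "\<And>j. j < m \<Longrightarrow> 0 \<le> x l j \<and> x l j \<le> 1" "(\<Sum>j<m. x l j) \<le> 1"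
  using assms unfolding is_GNE_def simplexC_def by auto

lemma sT_nonneg:
  assumes "is_GNE n m R p a k x" "j < m"
  shows "0 \<le> totalT_except n x i j"
  unfolding totalT_except_def using gne_basic[OF assms(1)] assms(2) by (auto intro: sum_nonneg)

lemma tot_split:
  assumes "i < n"
  shows "totalT n x j = x i j + totalT_except n x i j"
  unfolding totalT_def totalT_except_def using assms by (simp add: sum.remove)

lemma theta_facts:
  assumes "is_GNE n m R p a k x" "i < n"
  shows "\<And>j. j < m \<Longrightarrow> j \<notin> activeA n m R p a k x i \<Longrightarrow> x i j = 0"
    "\<And>j. j \<in> activeA n m R p a k x i \<Longrightarrow> x i j \<le> omega R p a k i j - totalT_except n x i j"
  using assms unfolding is_GNE_def thetaSet_def activeA_def by auto

lemma sum_J: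
  assumes "is_GNE n m R p a k x" "i < n"
  shows "(\<Sum>j<m. x i j) = (\<Sum>j\<in>Jset n m R p a k x i. x i j)"
proof -
  have f: "finite {..<m}" by simp
  have s: "Jset n m R p a k x i \<subseteq> {..<m}" unfolding Jset_def activeA_def by auto
  have z: "\<forall>j\<in>{..<m} - Jset n m R p a k x i. x i j = 0"
    using theta_facts[OF assms] unfolding Jset_def by auto
  show ?thesis using sum.mono_neutral_right[OF f s z] .
qed

lemma pos_upper:
  assumes G: "fragile_game n m R p a k" and GN: "is_GNE n m R p a k y" and i: "i < n"
    and J: "j \<in> Jset n m R p a k y i"
  shows "j < m" "0 < y i j" "y i j < omega R p a k i j - totalT_except n y i j"
    "0 \<le> totalT_except n y i j"
proof -
  have act: "j \<in> activeA n m R p a k y i" and nz: "y i j \<noteq> 0" using J unfolding Jset_def by auto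
  show jm: "j < m" using act unfolding activeA_def by auto
  show s0: "0 \<le> totalT_except n y i j" using sT_nonneg[OF GN jm] .
  have b: "0 \<le> y i j" "y i j \<le> 1" using gne_basic(1)[OF GN i jm] by auto
  then show yp: "0 < y i j" using nz by auto
  have le: "y i j \<le> omega R p a k i j - totalT_except n y i j" using theta_facts(2)[OF GN i act] .
  show "y i j < omega R p a k i j - totalT_except n y i j"
  proof (rule ccontr)
    assume "\<not> ?thesis"
    then have eq: "y i j + totalT_except n y i j = omega R p a k i j" using le by auto
    define v where "v = y i j / 2"
    have "v powr a i * Fij R p a k i j (v + totalT_except n y i j)
         \<le> y i j powr a i * Fij R p a k i j (y i j + totalT_except n y i j)"
      using local_opt[OF GN i act, of v] le b gne_basic(2)[OF GN i] unfolding v_def by auto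
    also have "\<dots> = 0" using eq game_F(9)[OF G i jm] by simp
    finally have "v powr a i * Fij R p a k i j (v + totalT_except n y i j) \<le> 0" .
    moreover have "v powr a i > 0" using yp v_def by simp
    moreover have "Fij R p a k i j (v + totalT_except n y i j) > 0"
    proof (rule game_F(10)[OF G i jm])
      show "0 \<le> v + totalT_except n y i j" "v + totalT_except n y i j < omega R p a k i j"
        using s0 yp eq v_def by auto
    qed
    ultimately show False by (metis mult_pos_pos not_le)
  qed
qed

lemma psi_ge:
  assumes G: "fragile_game n m R p a k" and GN: "is_GNE n m R p a k y" and i: "i < n"
    and J: "j \<in> Jset n m R p a k y i"
  shows "psi R p a k i j (y i j) (totalT_except n y i j) \<ge> 0"
proof -
  note pu = pos_upper[OF G GN i J]
  have act: "j \<in> activeA n m R p a k y i" using J unfolding Jset_def by auto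
  let ?s = "totalT_except n y i j"
  let ?g = "\<lambda>z. z powr a i * Fij R p a k i j (z + ?s)"
  have w1: "omega R p a k i j < 1" using game_F(8)[OF G i pu(1)] .
  have d: "Fij R p a k i j differentiable (at (y i j + ?s))"
    using game_F(5)[OF G i pu(1)] pu w1 by auto
  have D: "DERIV ?g (y i j) :> y i j powr (a i - 1) * psi R p a k i j (y i j) ?s"
    using g_deriv[OF d pu(2)] unfolding psi_def by simp
  have "y i j powr (a i - 1) * psi R p a k i j (y i j) ?s \<ge> 0"
  proof (rule left_opt[OF D pu(2)])
    fix v assume "y i j - y i j \<le> v" "v \<le> y i j"
    then show "?g v \<le> ?g (y i j)"
      using local_opt[OF GN i act, of v] pu gne_basic[OF GN i] w1 by auto
  qed
  moreover have "y i j powr (a i - 1) > 0" using pu by simp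
  ultimately show ?thesis by (simp add: zero_le_mult_iff)
qed

lemma psi_le:
  assumes G: "fragile_game n m R p a k" and GN: "is_GNE n m R p a k y" and i: "i < n"
    and J: "j \<in> Jset n m R p a k y i" and S: "(\<Sum>j<m. y i j) < 1"
  shows "psi R p a k i j (y i j) (totalT_except n y i j) \<le> 0"
proof -
  note pu = pos_upper[OF G GN i J]
  have act: "j \<in> activeA n m R p a k y i" using J unfolding Jset_def by auto
  let ?s = "totalT_except n y i j"
  let ?g = "\<lambda>z. z powr a i * Fij R p a k i j (z + ?s)"
  have w1: "omega R p a k i j < 1" using game_F(8)[OF G i pu(1)] .
  have d: "Fij R p a k i j differentiable (at (y i j + ?s))"
    using game_F(5)[OF G i pu(1)] pu w1 by auto
  have D: "DERIV ?g (y i j) :> y i j powr (a i - 1) * psi R p a k i j (y i j) ?s"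
    using g_deriv[OF d pu(2)] unfolding psi_def by simp
  define e where "e = min (omega R p a k i j - ?s - y i j) (1 - (\<Sum>j<m. y i j))"
  have e0: "e > 0" using pu S e_def by auto
  have "y i j powr (a i - 1) * psi R p a k i j (y i j) ?s \<le> 0"
  proof (rule right_opt[OF D e0])
    fix v assume "y i j \<le> v" "v \<le> y i j + e"
    then show "?g v \<le> ?g (y i j)"
      using local_opt[OF GN i act, of v] pu gne_basic[OF GN i] w1 e_def by auto
  qed
  moreover have "y i j powr (a i - 1) > 0" using pu by simp
  ultimately show ?thesis by (simp add: mult_le_0_iff)
qed

lemma half_le: "(v::real) \<le> t / 2 \<Longrightarrow> 0 < t \<Longrightarrow> v \<le> t" by linarith

lemma half_le2: "(v::real) \<le> (1 - S) / 2 \<Longrightarrow> 0 \<le> S \<Longrightarrow> v \<le> 1" by (simp add: field_simps)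
lemma half_le3: "(v::real) \<le> (1 - S) / 2 \<Longrightarrow> S < 1 \<Longrightarrow> S + v \<le> 1" by (simp add: field_simps)
lemma half_lt: "(v::real) \<le> t / 2 \<Longrightarrow> 0 < t \<Longrightarrow> v < t" by linarith

lemma active_nz:
  assumes G: "fragile_game n m R p a k" and GN: "is_GNE n m R p a k x" and i: "i < n"
    and T: "typeI n m R p a k x i" and act: "j \<in> activeA n m R p a k x i"
  shows "j \<in> Jset n m R p a k x i"
proof (rule ccontr)
  assume "j \<notin> Jset n m R p a k x i"
  then have z: "x i j = 0" using act unfolding Jset_def by auto
  have jm: "j < m" using act unfolding activeA_def by auto
  let ?s = "totalT_except n x i j"
  let ?S = "\<Sum>j<m. x i j"
  have S1: "?S < 1" using T sum_J[OF GN i] unfolding typeI_def by simp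
  have S0: "?S \<ge> 0" using gne_basic(1)[OF GN i] by (auto intro: sum_nonneg)
  have s0: "0 \<le> ?s" using sT_nonneg[OF GN jm] .
  have sw: "?s < omega R p a k i j" using act unfolding activeA_def by auto
  define v where "v = min (omega R p a k i j - ?s) (1 - ?S) / 2"
  have v: "0 < v" "v \<le> omega R p a k i j - ?s" "v \<le> 1" "?S - x i j + v \<le> 1" "v < omega R p a k i j - ?s"
  proof -
    have h: "v \<le> (omega R p a k i j - ?s) / 2" "v \<le> (1 - ?S) / 2" "v > 0"
      using S1 sw unfolding v_def by (auto simp: min_def)
    show "0 < v" using h by linarith
    show "v \<le> omega R p a k i j - ?s" using h sw half_le[of "omega R p a k i j - ?s" v] by simp
    show "v \<le> 1" using h S0 half_le2[of v ?S] by simp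
    show "?S - x i j + v \<le> 1" using h S1 z half_le3[of v ?S] by simp
    show "v < omega R p a k i j - ?s" using h sw half_lt[of v "omega R p a k i j - ?s"] by simp
  qed
  have "v powr a i * Fij R p a k i j (v + ?s) \<le> x i j powr a i * Fij R p a k i j (x i j + ?s)"
    using local_opt[OF GN i act, of v] v by auto
  also have "\<dots> = 0" using z by simp
  finally have "v powr a i * Fij R p a k i j (v + ?s) \<le> 0" .
  moreover have "v powr a i > 0" using v by simp
  moreover have "Fij R p a k i j (v + ?s) > 0"
  proof (rule game_F(10)[OF G i jm])
    show "0 \<le> v + ?s" "v + ?s < omega R p a k i j" using s0 v by auto
  qed
  ultimately show False by (metis mult_pos_pos not_le)
qed

lemma part1:
  assumes G: "fragile_game n m R p a k" and GX: "is_GNE n m R p a k x" and GY: "is_GNE n m R p a k y"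
    and tot: "\<forall>j<m. totalT n x j \<le> totalT n y j" and i: "i < n"
    and T: "typeI n m R p a k x i" and J: "j \<in> Jset n m R p a k y i"
  shows "j \<in> Jset n m R p a k x i"
proof -
  note pu = pos_upper[OF G GY i J]
  have "totalT_except n x i j \<le> totalT n x j"
    using tot_split[OF i, of x j] gne_basic(1)[OF GX i pu(1)] by auto
  also have "\<dots> \<le> totalT n y j" using tot pu(1) by auto
  also have "\<dots> < omega R p a k i j" using tot_split[OF i, of y j] pu by auto
  finally have "j \<in> activeA n m R p a k x i" unfolding activeA_def using pu(1) by auto
  then show ?thesis using active_nz[OF G GX i T] by blast
qed

lemma y_le_x:
  assumes G: "fragile_game n m R p a k" and GX: "is_GNE n m R p a k x" and GY: "is_GNE n m R p a k y"
    and tot: "\<forall>j<m. totalT n x j \<le> totalT n y j" and i: "i < n"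
    and T: "typeI n m R p a k x i" and J: "j \<in> Jset n m R p a k y i"
  shows "y i j \<le> x i j"
proof (rule ccontr)
  assume "\<not> ?thesis"
  then have gt: "x i j < y i j" by simp
  have Jx: "j \<in> Jset n m R p a k x i" using part1[OF assms] .
  note pu = pos_upper[OF G GY i J]
  note px = pos_upper[OF G GX i Jx]
  let ?F = "Fij R p a k i j"
  define tx where "tx = x i j + totalT_except n x i j"
  define ty where "ty = y i j + totalT_except n y i j"
  have txy: "tx \<le> ty" using tot pu(1) tot_split[OF i, of x j] tot_split[OF i, of y j]
    unfolding tx_def ty_def by auto
  have w1: "omega R p a k i j < 1" using game_F(8)[OF G i pu(1)] .
  have tx0: "0 < tx" using px unfolding tx_def by auto
  have ty1: "ty < 1" using pu w1 unfolding ty_def by auto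
  have d1: "deriv ?F ty \<le> deriv ?F tx" using game_F(4)[OF G i pu(1) tx0 txy ty1] .
  have d2: "deriv ?F ty < 0" using game_F(6)[OF G i pu(1)] tx0 txy ty1 by auto
  have f1: "?F ty \<le> ?F tx" using game_F(3)[OF G i pu(1), of tx ty] tx0 txy ty1
    by (cases "tx = ty") auto
  have a0: "a i > 0" using G i unfolding fragile_game_def by auto
  have psx: "x i j * deriv ?F tx + a i * ?F tx = 0"
    using T Jx unfolding typeI_def psi_def tx_def by auto
  have "y i j * deriv ?F ty < x i j * deriv ?F ty" using gt d2 by (rule mult_strict_right_mono_neg)
  also have "\<dots> \<le> x i j * deriv ?F tx" using d1 px(2) by (intro mult_left_mono) auto
  finally have "y i j * deriv ?F ty + a i * ?F ty < 0"
    using psx mult_left_mono[OF f1, of "a i"] a0 by linarith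
  then have "psi R p a k i j (y i j) (totalT_except n y i j) < 0"
    unfolding psi_def ty_def by simp
  then show False using psi_ge[OF G GY i J] by simp
qed

lemma player:
  assumes G: "fragile_game n m R p a k" and GX: "is_GNE n m R p a k x" and GY: "is_GNE n m R p a k y"
    and tot: "\<forall>j<m. totalT n x j \<le> totalT n y j" and i: "i < n"
    and T: "typeI n m R p a k x i"
  shows "Jset n m R p a k y i \<subseteq> Jset n m R p a k x i" "typeI n m R p a k y i"
proof -
  show sub: "Jset n m R p a k y i \<subseteq> Jset n m R p a k x i" using part1[OF assms] by blast
  have fin: "finite (Jset n m R p a k x i)" unfolding Jset_def activeA_def by auto
  have "(\<Sum>j\<in>Jset n m R p a k y i. y i j) \<le> (\<Sum>j\<in>Jset n m R p a k y i. x i j)"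
    using y_le_x[OF assms] by (intro sum_mono) auto
  also have "\<dots> \<le> (\<Sum>j\<in>Jset n m R p a k x i. x i j)"
    using sub fin gne_basic(1)[OF GX i] unfolding Jset_def activeA_def
    by (intro sum_mono2) auto
  also have "\<dots> < 1" using T unfolding typeI_def by simp
  finally have S: "(\<Sum>j\<in>Jset n m R p a k y i. y i j) < 1" .
  have "\<forall>j\<in>Jset n m R p a k y i. psi R p a k i j (y i j) (totalT_except n y i j) = 0"
    using psi_ge[OF G GY i] psi_le[OF G GY i] S sum_J[OF GY i] by (metis order_antisym)
  then show "typeI n m R p a k y i" using S unfolding typeI_def by simp
qed

theorem lemma6:
  fixes n m :: nat and R p :: "nat \<Rightarrow> real \<Rightarrow> real" and a k :: "nat \<Rightarrow> real"
    and x y :: "nat \<Rightarrow> nat \<Rightarrow> real"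
  assumes "fragile_game n m R p a k"
    and "is_GNE n m R p a k x" and "is_GNE n m R p a k y"
    and "\<forall>j<m. totalT n x j \<le> totalT n y j"
  shows "(\<forall>i\<in>TI n m R p a k x. Jset n m R p a k y i \<subseteq> Jset n m R p a k x i)
         \<and> TI n m R p a k x \<subseteq> TI n m R p a k y"
  using player[OF assms] unfolding TI_def by blast

end
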